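(* Let $r\ge1$ and $G\subset\mathbb{Z}_2^r$ a subgroup with $1^r\in G$, $S_G$ as below. Then $\dim_{\mathbb{C}}S_G=2^{2r-\dim G}P_G(\tfrac12)$, where $P_G(t)=\sum_{k=0}^r N_k(G)t^k$ and $N_k(G)=\#\{g\in G: g \text{ has exactly } k \text{ nonzero coordinates}\}$ ($\dim G$ is the $\mathbb{Z}_2$-dimension).
   Context: For $c\in\mathbb{Z}_2^{r+r}$, $|c|_l,|c|_r$ are the numbers of ones among the first/last $r$ coordinates, $|c|=|c|_l-|c|_r$ (componentwise products of codewords), $d_\perp=1^{2r}+d$, $\mathbb{Z}_2^d=\{\alpha:d\alpha=\alpha\}$, $A^\perp=\{\beta:|\beta a|\in2\mathbb{Z}\ \forall a\in A\}$. $\Delta(g)=(g,g)$; $D_G=\Delta G$, $C_G=D_G^\perp$. $C^{\rm even}_{r,r}=\{\alpha:|\alpha|\in2\mathbb{Z}\}$ with ordered basis $(v_1,\dots,v_{2r-1})=(\Delta e_1,\dots,\Delta e_r,\tilde e_1-\tilde e_2,\dots,\tilde e_{r-1}-\tilde e_r)$, $\tilde e_i=(e_i,0)$; $\varepsilon$ bimultiplicative to $\{\pm1\}$ with $\varepsilon(v_i,v_i)=(-1)^{|v_i|/2}$, $\varepsilon(v_i,v_j)=1$ ($i<j$), $(-1)^{|v_iv_j|}$ ($i>j$). $\mathbb{C}[\hat C_G]$: basis $e_\alpha$ ($\alpha\in C_G$), $e_\alpha e_\beta=\varepsilon(\alpha,\beta)e_{\alpha+\beta}$. For $d\in\Delta\mathbb{Z}_2^r$,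 $\Delta^d=\mathbb{Z}_2^d\cap\Delta\mathbb{Z}_2^r$, with $\{e_\gamma\}_{\gamma\in\Delta^d}$ spanning a copy of the group algebra $\mathbb{C}[\Delta^d]$. For $d\in D_G$, $A_G(d)=\mathbb{C}[\hat C_G]\otimes_{\mathbb{C}[\Delta^d]}\mathbb{C}t_d$ (trivial module) and $S_G=\bigoplus_{d\in D_G}A_G(d)$. *)

theory Defs
  imports Complex_Main "HOL-Library.Function_Algebras"
begin

text \<open>A codeword c in Z_2^(r+r) is the set of positions where it is 1; positions
  0..r-1 are the left half, positions r..2r-1 the right half.  Addition is
  symmetric difference, the componentwise product is intersection.\<close>

definition cw_add :: "nat set \<Rightarrow> nat set \<Rightarrow> nat set" where
  "cw_add a b = (a - b) \<union> (b - a)"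

definition wl :: "nat \<Rightarrow> nat set \<Rightarrow> nat" where
  "wl r c = card (c \<inter> {..<r})"

definition wr :: "nat \<Rightarrow> nat set \<Rightarrow> nat" where
  "wr r c = card (c \<inter> {r..<2*r})"

definition wt :: "nat \<Rightarrow> nat set \<Rightarrow> int" where
  "wt r c = int (wl r c) - int (wr r c)"

definition Dlt :: "nat \<Rightarrow> nat set \<Rightarrow> nat set" where
  "Dlt r g = g \<union> ((+) r) ` g"

definition xsum :: "nat set set \<Rightarrow> nat set" where
  "xsum S = {i. odd (card {c \<in> S. i \<in> c})}"

definition z2_subgroup :: "nat \<Rightarrow> nat set set \<Rightarrow> bool" where
  "z2_subgroup r G \<longleftrightarrow> G \<subseteq> Pow {..<r} \<and> {} \<in> G \<and> (\<forall>a\<in>G. \<forall>b\<in>G. cw_add a b \<in> G)"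

definition z2_span :: "nat set set \<Rightarrow> nat set set" where
  "z2_span B = {xsum S | S. S \<subseteq> B \<and> finite S}"

definition z2_dim :: "nat set set \<Rightarrow> nat" where
  "z2_dim G = Min {card B | B. B \<subseteq> G \<and> finite B \<and> z2_span B = G}"

definition Nk :: "nat set set \<Rightarrow> nat \<Rightarrow> nat" where
  "Nk G k = card {g \<in> G. card g = k}"

definition PG :: "nat \<Rightarrow> nat set set \<Rightarrow> real \<Rightarrow> real" where
  "PG r G t = (\<Sum>k=0..r. real (Nk G k) * t ^ k)"

definition DG :: "nat \<Rightarrow> nat set set \<Rightarrow> nat set set" where
  "DG r G = Dlt r ` G"

definition perp :: "nat \<Rightarrow> nat set set \<Rightarrow> nat set set" where
  "perp r A = {\<beta>. \<beta> \<subseteq> {..<2*r} \<and> (\<forall>a\<in>A. even (wt r (\<beta> \<inter> a)))}"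

definition CG :: "nat \<Rightarrow> nat set set \<Rightarrow> nat set set" where
  "CG r G = perp r (DG r G)"

definition Ceven :: "nat \<Rightarrow> nat set set" where
  "Ceven r = {\<alpha>. \<alpha> \<subseteq> {..<2*r} \<and> even (wt r \<alpha>)}"

text \<open>Ordered basis v_0,...,v_(2r-2) of C^even (0-indexed):
  v_i = Delta e_i for i < r, and v_(r+j) = e~_j - e~_(j+1) for j < r-1.\<close>
definition vb :: "nat \<Rightarrow> nat \<Rightarrow> nat set" where
  "vb r i = (if i < r then Dlt r {i} else {i - r, i - r + 1})"

definition sgnpow :: "int \<Rightarrow> complex" where
  "sgnpow k = (if even k then 1 else -1)"

definition eps0 :: "nat \<Rightarrow> nat \<Rightarrow> nat \<Rightarrow> complex" where
  "eps0 r i j =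
     (if i = j then sgnpow (wt r (vb r i) div 2)
      else if i < j then 1
      else sgnpow (wt r (vb r i \<inter> vb r j)))"

definition coords :: "nat \<Rightarrow> nat set \<Rightarrow> nat set" where
  "coords r \<alpha> = (THE S. S \<subseteq> {..<2*r-1} \<and> xsum (vb r ` S) = \<alpha>)"

definition eps :: "nat \<Rightarrow> nat set \<Rightarrow> nat set \<Rightarrow> complex" where
  "eps r \<alpha> \<beta> = (\<Prod>i\<in>coords r \<alpha>. \<Prod>j\<in>coords r \<beta>. eps0 r i j)"

text \<open>Elements of C[C_G^]: functions C_G -> C (extended by 0), x = sum_alpha x(alpha) e_alpha.\<close>
definition cscale :: "complex \<Rightarrow> (nat set \<Rightarrow> complex) \<Rightarrow> (nat set \<Rightarrow> complex)" where
  "cscale c f = (\<lambda>x. c * f x)"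

definition TA :: "nat \<Rightarrow> nat set set \<Rightarrow> (nat set \<Rightarrow> complex) set" where
  "TA r G = {f. \<forall>x. x \<notin> CG r G \<longrightarrow> f x = 0}"

definition e_el :: "nat set \<Rightarrow> (nat set \<Rightarrow> complex)" where
  "e_el \<gamma> = (\<lambda>x. if x = \<gamma> then 1 else 0)"

text \<open>Product with e_alpha e_beta = eps(alpha,beta) e_(alpha+beta)\<close>
definition tmult :: "nat \<Rightarrow> nat set set \<Rightarrow> (nat set \<Rightarrow> complex) \<Rightarrow> (nat set \<Rightarrow> complex) \<Rightarrow> (nat set \<Rightarrow> complex)" where
  "tmult r G f g = (\<lambda>\<gamma>. if \<gamma> \<in> CG r G then
      (\<Sum>\<alpha>\<in>CG r G. eps r \<alpha> (cw_add \<gamma> \<alpha>) * f \<alpha> * g (cw_add \<gamma> \<alpha>)) else 0)"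

definition Delta_d :: "nat \<Rightarrow> nat set \<Rightarrow> nat set set" where
  "Delta_d r d = {\<alpha>. \<alpha> \<subseteq> d} \<inter> Dlt r ` Pow {..<r}"

text \<open>A_G(d) = C[C_G^] \<otimes>_(C[Delta^d]) C t_d with the trivial module C t_d is the
  quotient of C[C_G^] by the span of the relations x e_gamma - x (gamma in Delta^d).\<close>
definition rel_A :: "nat \<Rightarrow> nat set set \<Rightarrow> nat set \<Rightarrow> (nat set \<Rightarrow> complex) set" where
  "rel_A r G d = module.span cscale
     {tmult r G x (e_el \<gamma>) - x | x \<gamma>. x \<in> TA r G \<and> \<gamma> \<in> Delta_d r d}"

definition dim_A :: "nat \<Rightarrow> nat set set \<Rightarrow> nat set \<Rightarrow> nat" where
  "dim_A r G d = vector_space.dim cscale (TA r G) - vector_space.dim cscale (rel_A r G d)"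

text \<open>S_G = direct sum over d in D_G of A_G(d)\<close>
definition dim_S :: "nat \<Rightarrow> nat set set \<Rightarrow> nat" where
  "dim_S r G = (\<Sum>d\<in>DG r G. dim_A r G d)"

end

theory Submission
  imports Defs
begin


lemma card_symd:
  fixes A B :: "'a set"
  assumes "finite A" "finite B"
  shows "card ((A - B) \<union> (B - A)) + 2 * card (A \<inter> B) = card A + card B"
proof -
  have d: "(A - B) \<inter> (B - A) = {}" by auto
  have "card ((A - B) \<union> (B - A)) = card (A - B) + card (B - A)"
    using assms d by (simp add: card_Un_disjoint)
  moreover have "card A = card (A - B) + card (A \<inter> B)"
  proof -
    have "A = (A - B) \<union> (A \<inter> B)" by auto
    then have "card A = card ((A - B) \<union> (A \<inter> B))" by simp
    also have "\<dots> = card (A - B) + card (A \<inter> B)" using assms by (intro card_Un_disjoint) auto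
    finally show ?thesis .
  qed
  moreover have "card B = card (B - A) + card (A \<inter> B)"
  proof -
    have "B = (B - A) \<union> (A \<inter> B)" by auto
    then have "card B = card ((B - A) \<union> (A \<inter> B))" by simp
    also have "\<dots> = card (B - A) + card (A \<inter> B)" using assms by (intro card_Un_disjoint) auto
    finally show ?thesis .
  qed
  ultimately show ?thesis by simp
qed

lemma even_card_symd:
  fixes A B :: "'a set"
  assumes "finite A" "finite B"
  shows "even (card ((A - B) \<union> (B - A))) \<longleftrightarrow> (even (card A) \<longleftrightarrow> even (card B))"
proof -
  have "even (card ((A - B) \<union> (B - A)) + 2 * card (A \<inter> B)) \<longleftrightarrow> even (card ((A - B) \<union> (B - A)))" by simp
  then show ?thesis using card_symd[OF assms] by (metis even_add)
qed

lemma even_card_cw_add: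
  assumes "finite A" "finite B"
  shows "even (card (cw_add A B)) \<longleftrightarrow> (even (card A) \<longleftrightarrow> even (card B))"
  unfolding cw_add_def by (rule even_card_symd[OF assms])

lemma cw_add_Int: "cw_add a b \<inter> X = cw_add (a \<inter> X) (b \<inter> X)"
  unfolding cw_add_def by auto

lemma cw_add_comm: "cw_add a b = cw_add b a" unfolding cw_add_def by auto
lemma cw_add_assoc: "cw_add (cw_add a b) c = cw_add a (cw_add b c)" unfolding cw_add_def by auto
lemma cw_add_self[simp]: "cw_add a a = {}" unfolding cw_add_def by auto
lemma cw_add_empty[simp]: "cw_add a {} = a" "cw_add {} a = a" unfolding cw_add_def by auto
lemma cw_add_cancel[simp]: "cw_add a (cw_add a b) = b" "cw_add (cw_add b a) a = b" unfolding cw_add_def by auto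
lemma cw_add_finite[simp]: "finite a \<Longrightarrow> finite b \<Longrightarrow> finite (cw_add a b)" unfolding cw_add_def by auto
lemma cw_add_subset: "a \<subseteq> X \<Longrightarrow> b \<subseteq> X \<Longrightarrow> cw_add a b \<subseteq> X" unfolding cw_add_def by auto
lemma cw_add_eq_iff: "cw_add a b = c \<longleftrightarrow> b = cw_add a c" unfolding cw_add_def by auto

lemma xsum_empty[simp]: "xsum {} = {}" unfolding xsum_def by simp

lemma xsum_insert:
  assumes "finite S" "x \<notin> S"
  shows "xsum (insert x S) = cw_add x (xsum S)"
proof -
  have "i \<in> xsum (insert x S) \<longleftrightarrow> i \<in> cw_add x (xsum S)" for i
  proof (cases "i \<in> x")
    case True
    then have "{c \<in> insert x S. i \<in> c} = insert x {c \<in> S. i \<in> c}" by auto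
    moreover have "card (insert x {c \<in> S. i \<in> c}) = Suc (card {c \<in> S. i \<in> c})"
      using assms by simp
    ultimately show ?thesis using True unfolding xsum_def cw_add_def by auto
  next
    case False
    then have "{c \<in> insert x S. i \<in> c} = {c \<in> S. i \<in> c}" by auto
    then show ?thesis using False unfolding xsum_def cw_add_def by auto
  qed
  then show ?thesis by blast
qed

lemma xsum_single[simp]: "xsum {x} = x"
  using xsum_insert[of "{}" x] by simp

lemma xsum_cw_add:
  assumes "finite S" "finite T"
  shows "xsum ((S - T) \<union> (T - S)) = cw_add (xsum S) (xsum T)"
proof -
  have "i \<in> xsum ((S - T) \<union> (T - S)) \<longleftrightarrow> i \<in> cw_add (xsum S) (xsum T)" for i
  proof -
    have e: "{c \<in> (S - T) \<union> (T - S). i \<in> c} = ({c \<in> S. i \<in> c} - {c \<in> T. i \<in> c}) \<union> ({c \<in> T. i \<in> c} - {c \<in> S. i \<in> c})"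
      by auto
    have "i \<in> xsum ((S - T) \<union> (T - S)) \<longleftrightarrow> odd (card {c \<in> (S - T) \<union> (T - S). i \<in> c})"
      unfolding xsum_def by simp
    also have "\<dots> \<longleftrightarrow> odd (card ({c \<in> S. i \<in> c} - {c \<in> T. i \<in> c} \<union> ({c \<in> T. i \<in> c} - {c \<in> S. i \<in> c})))"
      by (simp only: e)
    also have "\<dots> \<longleftrightarrow> \<not> (even (card {c \<in> S. i \<in> c}) \<longleftrightarrow> even (card {c \<in> T. i \<in> c}))"
      using even_card_symd[of "{c \<in> S. i \<in> c}" "{c \<in> T. i \<in> c}"] assms by simp
    also have "\<dots> \<longleftrightarrow> i \<in> cw_add (xsum S) (xsum T)"
      unfolding xsum_def cw_add_def by auto
    finally show ?thesis .
  qed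
  then show ?thesis by blast
qed

lemma xsum_closed:
  assumes "finite S" "S \<subseteq> H" "{} \<in> H" "\<And>a b. a \<in> H \<Longrightarrow> b \<in> H \<Longrightarrow> cw_add a b \<in> H"
  shows "xsum S \<in> H"
  using assms(1,2)
proof (induction S rule: finite_induct)
  case empty then show ?case using assms by simp
next
  case (insert x F) then show ?case using assms by (simp add: xsum_insert)
qed

lemma xsum_subset: "xsum S \<subseteq> \<Union>S"
  unfolding xsum_def by auto (metis (mono_tags, lifting) empty_Collect_eq card.empty even_zero)

lemma sum_zero_involution:
  fixes g :: "'a \<Rightarrow> real"
  assumes "finite A" "\<And>x. x \<in> A \<Longrightarrow> \<sigma> x \<in> A" "\<And>x. x \<in> A \<Longrightarrow> \<sigma> (\<sigma> x) = x"
    "\<And>x. x \<in> A \<Longrightarrow> g (\<sigma> x) = - g x"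
  shows "sum g A = 0"
proof -
  have "sum g A = sum (g \<circ> \<sigma>) A"
    by (rule sum.reindex_bij_witness[of _ \<sigma> \<sigma>]) (use assms in auto)
  also have "\<dots> = - sum g A" using assms(4) by (simp add: sum_negf)
  finally show ?thesis by simp
qed



lemma span_eq_image: "finite B \<Longrightarrow> z2_span B = xsum ` Pow B"
  unfolding z2_span_def by (auto intro: finite_subset)

lemma xsum_inj_minimal:
  assumes fB: "finite B" and SB: "S \<subseteq> B" and TB: "T \<subseteq> B" and eq: "xsum S = xsum T" and ne: "S \<noteq> T"
  obtains b where "b \<in> B" "z2_span (B - {b}) = z2_span B"
proof -
  define U where "U = (S - T) \<union> (T - S)"
  have fS: "finite S" "finite T" using fB SB TB finite_subset by auto
  have xU: "xsum U = {}" unfolding U_def using xsum_cw_add[OF fS] eq by simp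
  have "U \<noteq> {}" using ne unfolding U_def by auto
  then obtain b where bU: "b \<in> U" by auto
  have UB: "U \<subseteq> B" using SB TB unfolding U_def by auto
  have fU: "finite U" using fB UB finite_subset by auto
  have "z2_span B \<subseteq> z2_span (B - {b})"
  proof
    fix y assume "y \<in> z2_span B"
    then obtain X where X: "X \<subseteq> B" "y = xsum X" using span_eq_image[OF fB] by auto
    have fX: "finite X" using X fB finite_subset by auto
    show "y \<in> z2_span (B - {b})"
    proof (cases "b \<in> X")
      case False
      then show ?thesis using X fX unfolding z2_span_def by auto
    next
      case True
      define X' where "X' = (X - U) \<union> (U - X)"
      have "xsum X' = cw_add (xsum X) (xsum U)" unfolding X'_def by (rule xsum_cw_add[OF fX fU])
      then have "xsum X' = y" using xU X by simp
      moreover have "X' \<subseteq> B - {b}" using True bU X UB unfolding X'_def by auto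
      moreover have "finite X'" unfolding X'_def using fX fU by auto
      ultimately show ?thesis unfolding z2_span_def by auto
    qed
  qed
  moreover have "z2_span (B - {b}) \<subseteq> z2_span B" unfolding z2_span_def by auto
  ultimately show ?thesis using that bU UB by auto
qed

lemma card_subgroup_dim:
  assumes HX: "H \<subseteq> Pow X" and fX: "finite X" and e: "{} \<in> H"
    and cl: "\<And>a b. a \<in> H \<Longrightarrow> b \<in> H \<Longrightarrow> cw_add a b \<in> H"
  shows "card H = 2 ^ z2_dim H"
proof -
  have fH: "finite H" using HX fX by (meson finite_Pow_iff finite_subset)
  define M where "M = {card B | B. B \<subseteq> H \<and> finite B \<and> z2_span B = H}"
  have spanH: "z2_span H = H"
  proof
    show "z2_span H \<subseteq> H" unfolding z2_span_def using xsum_closed[OF _ _ e cl] by auto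
    show "H \<subseteq> z2_span H" unfolding z2_span_def
    proof
      fix h assume "h \<in> H" then show "h \<in> {xsum S |S. S \<subseteq> H \<and> finite S}"
        by (intro CollectI exI[of _ "{h}"]) auto
    qed
  qed
  have "card H \<in> M" unfolding M_def using fH spanH by auto
  then have Mne: "M \<noteq> {}" by auto
  have fM: "finite M"
  proof -
    have "M \<subseteq> card ` Pow H" unfolding M_def by auto
    then show ?thesis using fH by (meson finite_Pow_iff finite_imageI finite_subset)
  qed
  have "z2_dim H \<in> M" unfolding z2_dim_def M_def[symmetric] using Min_in[OF fM Mne] .
  then obtain B where B: "B \<subseteq> H" "finite B" "z2_span B = H" "card B = z2_dim H" unfolding M_def by auto
  have minB: "z2_dim H \<le> card B'" if "B' \<subseteq> H" "finite B'" "z2_span B' = H" for B'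
    unfolding z2_dim_def M_def[symmetric] using that by (intro Min_le[OF fM]) (auto simp: M_def)
  have inj: "inj_on xsum (Pow B)"
  proof (rule inj_onI, rule ccontr)
    fix S T assume ST: "S \<in> Pow B" "T \<in> Pow B" "xsum S = xsum T" "S \<noteq> T"
    obtain b where b: "b \<in> B" "z2_span (B - {b}) = z2_span B"
      using xsum_inj_minimal[OF B(2), of S T] ST by blast
    have "z2_dim H \<le> card (B - {b})" using b B by (intro minB) auto
    moreover have "card (B - {b}) < card B" using b B(2) by (meson card_Diff1_less)
    ultimately show False using B(4) by simp
  qed
  have "card H = card (xsum ` Pow B)" using B span_eq_image by simp
  also have "\<dots> = card (Pow B)" using inj by (simp add: card_image)
  also have "\<dots> = 2 ^ card B" using B(2) by (simp add: card_Pow)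
  finally show ?thesis using B(4) by simp
qed

definition perpn :: "nat \<Rightarrow> nat set set \<Rightarrow> nat set set" where
  "perpn n H = {\<beta>. \<beta> \<subseteq> {..<n} \<and> (\<forall>h\<in>H. even (card (\<beta> \<inter> h)))}"

definition chi :: "nat set \<Rightarrow> nat set \<Rightarrow> real" where
  "chi b h = (if even (card (b \<inter> h)) then 1 else -1)"

lemma chi_add: "finite b \<Longrightarrow> chi b (cw_add h0 h) = chi b h0 * chi b h"
  unfolding chi_def using even_card_cw_add[of "b \<inter> h0" "b \<inter> h"]
  by (simp add: cw_add_Int[of h0 h b, simplified Int_commute] Int_commute)

lemma chi_add2: "finite h \<Longrightarrow> finite b \<Longrightarrow> finite b0 \<Longrightarrow> chi (cw_add b0 b) h = chi b0 h * chi b h"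
  unfolding chi_def using even_card_cw_add[of "b0 \<inter> h" "b \<inter> h"]
  by (simp add: cw_add_Int)

lemma card_perp_mult:
  assumes HX: "H \<subseteq> Pow {..<n}" and e: "{} \<in> H"
    and cl: "\<And>a b. a \<in> H \<Longrightarrow> b \<in> H \<Longrightarrow> cw_add a b \<in> H"
  shows "card (perpn n H) * card H = 2 ^ n"
proof -
  have fH: "finite H" using HX by (meson finite_Pow_iff finite_lessThan finite_subset)
  have hfin: "finite h" if "h \<in> H" for h using HX that finite_subset by auto
  have inner1: "(\<Sum>h\<in>H. chi b h) = (if b \<in> perpn n H then real (card H) else 0)"
    if b: "b \<subseteq> {..<n}" for b
  proof (cases "b \<in> perpn n H")
    case True
    then have "\<forall>h\<in>H. chi b h = 1" unfolding perpn_def chi_def by auto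
    then show ?thesis using True by simp
  next
    case False
    then obtain h0 where h0: "h0 \<in> H" "odd (card (b \<inter> h0))" using b unfolding perpn_def by auto
    have fb: "finite b" using b finite_subset by auto
    have c0: "chi b h0 = -1" using h0 unfolding chi_def by simp
    have "(\<Sum>h\<in>H. chi b h) = 0"
    proof (rule sum_zero_involution[where \<sigma>="cw_add h0"])
      fix h assume hH: "h \<in> H"
      show "cw_add h0 h \<in> H" using cl[OF h0(1) hH] .
      show "cw_add h0 (cw_add h0 h) = h" by (rule cw_add_cancel(1))
      show "chi b (cw_add h0 h) = - chi b h" using chi_add[OF fb, of h0 h] c0 by simp
    qed (rule fH)
    then show ?thesis using False by simp
  qed
  have inner2: "(\<Sum>b\<in>Pow {..<n}. chi b h) = (if h = {} then 2 ^ n else 0)"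
    if h: "h \<in> H" for h
  proof (cases "h = {}")
    case True
    then show ?thesis by (simp add: chi_def card_Pow)
  next
    case False
    then obtain i where i: "i \<in> h" by auto
    have iN: "i < n" using i h HX by auto
    have "(\<Sum>b\<in>Pow {..<n}. chi b h) = 0"
    proof (rule sum_zero_involution[where \<sigma>="\<lambda>b. cw_add {i} b"])
      fix b assume b: "b \<in> Pow {..<n}"
      have fb: "finite b" using b finite_subset by auto
      show "cw_add {i} b \<in> Pow {..<n}" using b iN unfolding cw_add_def by auto
      show "cw_add {i} (cw_add {i} b) = b" by simp
      show "chi (cw_add {i} b) h = - chi b h"
        using chi_add2[OF hfin[OF h] fb, of "{i}"] i by (simp add: chi_def)
    qed simp
    then show ?thesis using False by simp
  qed
  have "(\<Sum>b\<in>Pow {..<n}. \<Sum>h\<in>H. chi b h) = (\<Sum>b\<in>Pow {..<n}. if b \<in> perpn n H then real (card H) else 0)"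
    using inner1 by (intro sum.cong) auto
  also have "\<dots> = real (card (perpn n H)) * real (card H)"
  proof -
    have "perpn n H \<subseteq> Pow {..<n}" unfolding perpn_def by auto
    then have "(\<Sum>b\<in>Pow {..<n}. if b \<in> perpn n H then real (card H) else 0) = (\<Sum>b\<in>perpn n H. real (card H))"
      by (simp add: sum.If_cases Int_absorb1)
    then show ?thesis by simp
  qed
  finally have l: "(\<Sum>b\<in>Pow {..<n}. \<Sum>h\<in>H. chi b h) = real (card (perpn n H)) * real (card H)" .
  have "(\<Sum>b\<in>Pow {..<n}. \<Sum>h\<in>H. chi b h) = (\<Sum>h\<in>H. \<Sum>b\<in>Pow {..<n}. chi b h)"
    by (rule sum.swap)
  also have "\<dots> = (\<Sum>h\<in>H. if h = {} then 2 ^ n else 0)" using inner2 by (intro sum.cong) auto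
  also have "\<dots> = 2 ^ n" using e fH by (simp add: sum.If_cases)
  finally have "real (card (perpn n H)) * real (card H) = 2 ^ n" using l by simp
  then have "real (card (perpn n H) * card H) = real (2 ^ n)" by simp
  then show ?thesis by (simp only: of_nat_eq_iff)
qed



lemma Dlt_sub: "g \<subseteq> {..<r} \<Longrightarrow> Dlt r g \<subseteq> {..<2*r}"
  unfolding Dlt_def by auto

lemma Dlt_left: "g \<subseteq> {..<r} \<Longrightarrow> Dlt r g \<inter> {..<r} = g"
  unfolding Dlt_def by auto

lemma Dlt_inj: "inj_on (Dlt r) (Pow {..<r})"
  by (rule inj_onI) (metis Dlt_left PowD)

lemma Dlt_empty[simp]: "Dlt r {} = {}" unfolding Dlt_def by simp

lemma Dlt_add: "a \<subseteq> {..<r} \<Longrightarrow> b \<subseteq> {..<r} \<Longrightarrow> Dlt r (cw_add a b) = cw_add (Dlt r a) (Dlt r b)"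
  unfolding Dlt_def cw_add_def by auto

lemma Dlt_Int: "a \<subseteq> {..<r} \<Longrightarrow> b \<subseteq> {..<r} \<Longrightarrow> Dlt r a \<inter> Dlt r b = Dlt r (a \<inter> b)"
  unfolding Dlt_def by auto

lemma Dlt_mono_iff: "a \<subseteq> {..<r} \<Longrightarrow> b \<subseteq> {..<r} \<Longrightarrow> Dlt r a \<subseteq> Dlt r b \<longleftrightarrow> a \<subseteq> b"
  unfolding Dlt_def by auto

lemma card_Dlt: assumes "g \<subseteq> {..<r}" shows "card (Dlt r g) = 2 * card g"
proof -
  have f: "finite g" using assms finite_subset by auto
  have d: "g \<inter> (+) r ` g = {}" using assms by auto
  have "card ((+) r ` g) = card g" by (simp add: card_image)
  then show ?thesis unfolding Dlt_def using card_Un_disjoint[OF f _ d] f by simp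
qed

lemma wt_even_iff:
  assumes "\<beta> \<subseteq> {..<2*r}"
  shows "even (wt r \<beta>) \<longleftrightarrow> even (card \<beta>)"
proof -
  have u: "\<beta> = (\<beta> \<inter> {..<r}) \<union> (\<beta> \<inter> {r..<2*r})" using assms by auto
  have "card \<beta> = wl r \<beta> + wr r \<beta>" unfolding wl_def wr_def
    by (subst u, rule card_Un_disjoint) auto
  then have "even (card \<beta>) \<longleftrightarrow> even (int (wl r \<beta>) + int (wr r \<beta>))" by simp
  also have "\<dots> \<longleftrightarrow> even (wt r \<beta>)" unfolding wt_def by simp
  finally show ?thesis by simp
qed

lemma perp_eq: "perp r A = perpn (2*r) A"
proof -
  have "\<beta> \<subseteq> {..<2*r} \<Longrightarrow> even (wt r (\<beta> \<inter> a)) \<longleftrightarrow> even (card (\<beta> \<inter> a))" for \<beta> a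
    by (rule wt_even_iff) auto
  then show ?thesis unfolding perp_def perpn_def by blast
qed

lemma Ceven_eq: "Ceven r = {\<alpha>. \<alpha> \<subseteq> {..<2*r} \<and> even (card \<alpha>)}"
  unfolding Ceven_def using wt_even_iff by blast

lemma Ceven_add: "a \<in> Ceven r \<Longrightarrow> b \<in> Ceven r \<Longrightarrow> cw_add a b \<in> Ceven r"
  unfolding Ceven_eq using even_card_cw_add[of a b] finite_subset[of _ "{..<2*r}"]
  by (auto simp: cw_add_subset)

lemma Ceven_empty[simp]: "{} \<in> Ceven r" unfolding Ceven_eq by simp

lemma perpn_add: "a \<in> perpn n H \<Longrightarrow> b \<in> perpn n H \<Longrightarrow> cw_add a b \<in> perpn n H"
proof -
  assume a: "a \<in> perpn n H" and b: "b \<in> perpn n H"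
  have fa: "finite a" "finite b" using a b unfolding perpn_def using finite_subset by auto
  show ?thesis unfolding perpn_def
  proof (intro CollectI conjI ballI)
    show "cw_add a b \<subseteq> {..<n}" using a b unfolding perpn_def by (auto simp: cw_add_subset)
    fix h assume "h \<in> H"
    then show "even (card (cw_add a b \<inter> h))" using a b fa
      unfolding cw_add_Int perpn_def using even_card_cw_add[of "a \<inter> h" "b \<inter> h"] by auto
  qed
qed

lemma perpn_empty: "{} \<in> perpn n H" unfolding perpn_def by simp

context
  fixes r :: nat and G :: "nat set set"
  assumes r1: "r \<ge> 1" and sg: "z2_subgroup r G" and top: "{..<r} \<in> G"
begin

lemma G_sub: "G \<subseteq> Pow {..<r}" using sg unfolding z2_subgroup_def by auto
lemma G_fin: "finite G" using G_sub by (meson finite_Pow_iff finite_lessThan finite_subset)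

lemma DG_sub: "DG r G \<subseteq> Pow {..<2*r}" unfolding DG_def using G_sub Dlt_sub by auto

lemma DG_add: "a \<in> DG r G \<Longrightarrow> b \<in> DG r G \<Longrightarrow> cw_add a b \<in> DG r G"
  unfolding DG_def using G_sub sg unfolding z2_subgroup_def
  by (auto simp: Dlt_add[symmetric]) (metis Dlt_add PowD image_eqI subsetD)

lemma DG_empty: "{} \<in> DG r G" unfolding DG_def using sg unfolding z2_subgroup_def
  by (metis Dlt_empty image_eqI)

lemma card_DG: "card (DG r G) = card G"
  unfolding DG_def using G_sub by (intro card_image inj_on_subset[OF Dlt_inj])

lemma card_G: "card G = 2 ^ z2_dim G"
  by (rule card_subgroup_dim[OF G_sub]) (use sg in \<open>auto simp: z2_subgroup_def\<close>)

lemma CG_eq: "CG r G = perpn (2*r) (DG r G)" unfolding CG_def perp_eq ..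

lemma card_CG: "card (CG r G) = 2 ^ (2*r - z2_dim G)"
proof -
  have m: "card (CG r G) * 2 ^ z2_dim G = 2 ^ (2*r)"
    using card_perp_mult[OF DG_sub DG_empty DG_add] card_DG card_G CG_eq by simp
  then have "2 ^ z2_dim G \<le> (2::nat) ^ (2*r)" by (metis dvd_imp_le dvd_triv_right pos2 zero_less_power)
  then have le: "z2_dim G \<le> 2*r" by simp
  then have "(2::nat) ^ (2*r) = 2 ^ (2*r - z2_dim G) * 2 ^ z2_dim G" by (simp flip: power_add)
  then show ?thesis using m by simp
qed

lemma CG_add: "a \<in> CG r G \<Longrightarrow> b \<in> CG r G \<Longrightarrow> cw_add a b \<in> CG r G"
  unfolding CG_eq by (rule perpn_add)

lemma CG_empty: "{} \<in> CG r G" unfolding CG_eq by (rule perpn_empty)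

lemma CG_fin: "finite (CG r G)"
  unfolding CG_eq perpn_def by (rule finite_subset[of _ "Pow {..<2*r}"]) auto

lemma CG_Ceven: "CG r G \<subseteq> Ceven r"
proof
  fix b assume b: "b \<in> CG r G"
  have "Dlt r {..<r} \<in> DG r G" unfolding DG_def using top by auto
  moreover have "Dlt r {..<r} = {..<2*r}" unfolding Dlt_def
  proof (intro equalityI subsetI)
    fix x assume "x \<in> {..<2*r}"
    then show "x \<in> {..<r} \<union> (+) r ` {..<r}"
      by (cases "x < r") (auto intro!: image_eqI[of x "(+) r" "x - r"])
  qed auto
  ultimately have "even (card (b \<inter> {..<2*r}))" using b unfolding CG_eq perpn_def by auto
  moreover have "b \<subseteq> {..<2*r}" using b unfolding CG_eq perpn_def by auto
  ultimately show "b \<in> Ceven r" unfolding Ceven_eq by (simp add: Int_absorb2)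
qed

lemma Dlt_CG: "h \<subseteq> {..<r} \<Longrightarrow> Dlt r h \<in> CG r G"
  unfolding CG_eq perpn_def DG_def
proof (intro CollectI conjI ballI)
  assume h: "h \<subseteq> {..<r}"
  show "Dlt r h \<subseteq> {..<2*r}" using Dlt_sub[OF h] .
  fix a assume "a \<in> Dlt r ` G"
  then obtain g where g: "g \<in> G" "a = Dlt r g" by auto
  have gs: "g \<subseteq> {..<r}" using g G_sub by auto
  show "even (card (Dlt r h \<inter> a))" using g Dlt_Int[OF h gs] card_Dlt[of "h \<inter> g" r] h by (simp add: le_infI1)
qed

end



lemma vb_lo: "i < r \<Longrightarrow> vb r i = {i, r + i}"
  unfolding vb_def Dlt_def by auto

lemma vb_hi: "\<not> i < r \<Longrightarrow> vb r i = {i - r, i - r + 1}"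
  unfolding vb_def by auto

lemma vb_Dlt: "i < r \<Longrightarrow> vb r i = Dlt r {i}"
  unfolding vb_def by simp

lemma vb_Ceven: assumes "i < 2*r - 1" shows "vb r i \<in> Ceven r"
proof (cases "i < r")
  case True then show ?thesis unfolding Ceven_eq using vb_lo[OF True] by auto
next
  case False
  have a: "i - r + 1 < 2 * r" "i - r < 2 * r" using assms False by linarith+
  have "card {i - r, i - r + 1} = 2" by simp
  then show ?thesis unfolding Ceven_eq using vb_hi[OF False] a by simp
qed

lemma vb_inv: assumes "i < 2*r - 1"
  shows "(if \<exists>x\<in>vb r i. r \<le> x then Min (vb r i) else Min (vb r i) + r) = i"
proof (cases "i < r")
  case True
  have m: "Min {i, r + i} = i" by (simp add: min_def)
  show ?thesis unfolding vb_lo[OF True] m by auto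
next
  case False
  have lt: "i - r + 1 < r" using assms False by linarith
  have m: "Min {i - r, i - r + 1} = i - r" by (simp add: min_def)
  have "\<not> (\<exists>x\<in>{i - r, i - r + 1}. r \<le> x)" using lt by auto
  then show ?thesis unfolding vb_hi[OF False] m using False by simp
qed

lemma vb_inj: assumes "r \<ge> 1" shows "inj_on (vb r) {..<2*r-1}"
  by (rule inj_on_inverseI[where g="\<lambda>X. if \<exists>x\<in>X. r \<le> x then Min X else Min X + r"])
     (use vb_inv in auto)

definition phi :: "nat \<Rightarrow> nat set \<Rightarrow> nat set" where
  "phi r S = xsum (vb r ` S)"

lemma phi_add:
  assumes r: "r \<ge> 1" and S: "S \<subseteq> {..<2*r-1}" and T: "T \<subseteq> {..<2*r-1}"
  shows "phi r (cw_add S T) = cw_add (phi r S) (phi r T)"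
proof -
  have inj: "inj_on (vb r) (S \<union> T)" by (rule inj_on_subset[OF vb_inj[OF r]]) (use S T in auto)
  have "vb r ` cw_add S T = (vb r ` S - vb r ` T) \<union> (vb r ` T - vb r ` S)"
  proof -
    have "vb r ` (S - T) = vb r ` S - vb r ` T" by (rule inj_on_image_set_diff[OF inj]) auto
    moreover have "vb r ` (T - S) = vb r ` T - vb r ` S" by (rule inj_on_image_set_diff[OF inj]) auto
    ultimately show ?thesis unfolding cw_add_def image_Un by simp
  qed
  moreover have "finite S" "finite T" using S T finite_subset by auto
  ultimately show ?thesis unfolding phi_def by (simp add: xsum_cw_add)
qed

lemma phi_Ceven:
  assumes S: "S \<subseteq> {..<2*r-1}"
  shows "phi r S \<in> Ceven r"
proof -
  have "finite S" using S finite_subset by auto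
  then show ?thesis unfolding phi_def
    by (intro xsum_closed) (use S vb_Ceven Ceven_add in auto)
qed

lemma phi_empty[simp]: "phi r {} = {}" unfolding phi_def by simp

lemma phi_indep:
  assumes r: "r \<ge> 1" and U: "U \<subseteq> {..<2*r-1}" and z: "phi r U = {}"
  shows "U = {}"
proof (rule ccontr)
  assume ne: "U \<noteq> {}"
  have fU: "finite U" using U finite_subset by auto
  define m where "m = Min U"
  have mU: "m \<in> U" using Min_in[OF fU ne] m_def by simp
  have mmin: "\<And>u. u \<in> U \<Longrightarrow> m \<le> u" using Min_le[OF fU] m_def by simp
  obtain p where p: "{u \<in> U. p \<in> vb r u} = {m}"
  proof (cases "m < r")
    case True
    have "{u \<in> U. r + m \<in> vb r u} = {m}"
    proof (intro equalityI subsetI)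
      fix u assume "u \<in> {u \<in> U. r + m \<in> vb r u}"
      then have u: "u \<in> U" "r + m \<in> vb r u" by auto
      show "u \<in> {m}"
      proof (cases "u < r")
        case True then show ?thesis using u vb_lo[of u r] by auto
      next
        case False then show ?thesis using u vb_hi[of u r] U by auto
      qed
    qed (use mU vb_lo[OF True] in auto)
    then show ?thesis using that by blast
  next
    case False
    have "{u \<in> U. m - r \<in> vb r u} = {m}"
    proof (intro equalityI subsetI)
      fix u assume "u \<in> {u \<in> U. m - r \<in> vb r u}"
      then have u: "u \<in> U" "m - r \<in> vb r u" by auto
      have "m \<le> u" using mmin u by simp
      then have "\<not> u < r" using False by simp
      then show "u \<in> {m}" using u vb_hi[of u r] False \<open>m \<le> u\<close> by auto
    qed (use mU vb_hi[OF False] in auto)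
    then show ?thesis using that by blast
  qed
  have "{c \<in> vb r ` U. p \<in> c} = vb r ` {u \<in> U. p \<in> vb r u}" by auto
  then have "card {c \<in> vb r ` U. p \<in> c} = 1" using p by simp
  then have "p \<in> phi r U" unfolding phi_def xsum_def by simp
  then show False using z by simp
qed

lemma phi_inj: assumes r: "r \<ge> 1" shows "inj_on (phi r) (Pow {..<2*r-1})"
proof (rule inj_onI)
  fix S T assume S: "S \<in> Pow {..<2*r-1}" and T: "T \<in> Pow {..<2*r-1}" and e: "phi r S = phi r T"
  have "phi r (cw_add S T) = {}" using phi_add[OF r] S T e by simp
  then have "cw_add S T = {}" using phi_indep[OF r] S T by (simp add: cw_add_subset)
  then show "S = T" unfolding cw_add_def by auto
qed

lemma card_even_subsets:
  assumes n: "n \<ge> 1"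
  shows "card {\<alpha>. \<alpha> \<subseteq> {..<n} \<and> even (card \<alpha>)} = 2 ^ (n - 1)"
proof -
  define E where "E = {\<alpha>. \<alpha> \<subseteq> {..<n} \<and> even (card \<alpha>)}"
  define Od where "Od = {\<alpha>. \<alpha> \<subseteq> {..<n} \<and> odd (card \<alpha>)}"
  have pu: "Pow {..<n} = E \<union> Od" unfolding E_def Od_def by auto
  have fE: "finite E" "finite Od" using pu by (metis finite_Pow_iff finite_Un finite_lessThan)+
  have dj: "E \<inter> Od = {}" unfolding E_def Od_def by auto
  have c1: "card E + card Od = 2 ^ n"
  proof -
    have "card (Pow {..<n}) = 2 ^ n" by (simp add: card_Pow)
    then show ?thesis using card_Un_disjoint[OF fE dj] pu by simp
  qed
  have img: "Od = cw_add {0} ` E"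
  proof (intro equalityI subsetI)
    fix a assume a: "a \<in> Od"
    have fa: "finite a" using a unfolding Od_def using finite_subset by auto
    have "cw_add {0} a \<in> E" using a n even_card_cw_add[of "{0}" a] fa
      unfolding Od_def E_def by (auto simp: cw_add_subset)
    then show "a \<in> cw_add {0} ` E" by (intro image_eqI[of _ _ "cw_add {0} a"]) auto
  next
    fix a assume "a \<in> cw_add {0} ` E"
    then obtain b where b: "b \<in> E" "a = cw_add {0} b" by auto
    have fb: "finite b" using b unfolding E_def using finite_subset by auto
    show "a \<in> Od" using b n even_card_cw_add[of "{0}" b] fb
      unfolding Od_def E_def by (auto simp: cw_add_subset)
  qed
  have "inj_on (cw_add {0}) E" by (rule inj_onI) (metis cw_add_cancel(1))
  then have "card Od = card E" using img by (simp add: card_image)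
  then have "2 * card E = 2 ^ n" using c1 by simp
  moreover have "(2::nat) ^ n = 2 * 2 ^ (n - 1)" using n by (cases n) auto
  ultimately show ?thesis unfolding E_def by simp
qed

lemma phi_bij: assumes r: "r \<ge> 1" shows "phi r ` Pow {..<2*r-1} = Ceven r"
proof (rule card_seteq)
  have "Ceven r \<subseteq> Pow {..<2*r}" unfolding Ceven_eq by auto
  then show "finite (Ceven r)" by (rule finite_subset) simp
  show "phi r ` Pow {..<2*r-1} \<subseteq> Ceven r" using phi_Ceven by auto
  have "card (phi r ` Pow {..<2*r-1}) = 2 ^ (2*r-1)"
    using phi_inj[OF r] by (simp add: card_image card_Pow)
  moreover have "card (Ceven r) = 2 ^ (2*r-1)" unfolding Ceven_eq
    by (rule card_even_subsets) (use r in simp)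
  ultimately show "card (Ceven r) \<le> card (phi r ` Pow {..<2*r-1})" by simp
qed

lemma coords_eq:
  assumes r: "r \<ge> 1" and S: "S \<subseteq> {..<2*r-1}" and a: "phi r S = \<alpha>"
  shows "coords r \<alpha> = S"
  unfolding coords_def
proof (rule the_equality)
  show "S \<subseteq> {..<2*r-1} \<and> xsum (vb r ` S) = \<alpha>" using S a unfolding phi_def by simp
  fix T assume "T \<subseteq> {..<2*r-1} \<and> xsum (vb r ` T) = \<alpha>"
  then show "T = S" using phi_inj[OF r] S a unfolding phi_def inj_on_def by auto
qed

lemma coords_ok:
  assumes r: "r \<ge> 1" and a: "\<alpha> \<in> Ceven r"
  shows "coords r \<alpha> \<subseteq> {..<2*r-1}" "phi r (coords r \<alpha>) = \<alpha>"
proof -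
  obtain S where S: "S \<subseteq> {..<2*r-1}" "phi r S = \<alpha>" using phi_bij[OF r] a by (metis PowD imageE)
  then show "coords r \<alpha> \<subseteq> {..<2*r-1}" "phi r (coords r \<alpha>) = \<alpha>" using coords_eq[OF r S] by auto
qed

lemma coords_add:
  assumes r: "r \<ge> 1" and a: "\<alpha> \<in> Ceven r" and b: "\<beta> \<in> Ceven r"
  shows "coords r (cw_add \<alpha> \<beta>) = cw_add (coords r \<alpha>) (coords r \<beta>)"
  by (rule coords_eq[OF r]) (use coords_ok[OF r a] coords_ok[OF r b] phi_add[OF r] in \<open>auto simp: cw_add_subset\<close>)

lemma coords_empty: assumes r: "r \<ge> 1" shows "coords r {} = {}"
  by (rule coords_eq[OF r]) auto

lemma phi_Dlt: assumes r: "r \<ge> 1" and h: "h \<subseteq> {..<r}" shows "phi r h = Dlt r h"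
proof -
  have "finite h" using h finite_subset by auto
  then show ?thesis using h
  proof (induction h rule: finite_induct)
    case empty then show ?case by simp
  next
    case (insert x F)
    have hs: "{..<r} \<subseteq> {..<2*r-1}" using r by auto
    have e: "insert x F = cw_add {x} F" using insert(2) unfolding cw_add_def by auto
    have "phi r (insert x F) = cw_add (phi r {x}) (phi r F)"
      unfolding e using insert(4) hs by (intro phi_add[OF r]) auto
    also have "\<dots> = cw_add (Dlt r {x}) (Dlt r F)" using insert vb_Dlt[of x r] unfolding phi_def by auto
    also have "\<dots> = Dlt r (insert x F)" unfolding e using insert(4) by (simp add: Dlt_add)
    finally show ?case .
  qed
qed

lemma coords_Dlt: assumes r: "r \<ge> 1" and h: "h \<subseteq> {..<r}" shows "coords r (Dlt r h) = h"
proof (rule coords_eq[OF r])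
  have "{..<r} \<subseteq> {..<2*r-1}" using r by auto
  then show "h \<subseteq> {..<2*r-1}" using h by (rule subset_trans[rotated])
qed (rule phi_Dlt[OF r h])

lemma sgnpow_sq[simp]: "sgnpow k * sgnpow k = 1" unfolding sgnpow_def by simp
lemma eps0_sq[simp]: "eps0 r i j * eps0 r i j = 1" unfolding eps0_def by simp

lemma prod_sq:
  fixes f :: "nat \<Rightarrow> complex"
  assumes "\<And>i. f i * f i = 1" shows "prod f A * prod f A = 1"
  using assms by (simp flip: prod.distrib)

lemma prod_cw_add:
  fixes f :: "nat \<Rightarrow> complex"
  assumes A: "finite A" and B: "finite B" and sq: "\<And>i. f i * f i = 1"
  shows "prod f (cw_add A B) = prod f A * prod f B"
proof -
  have 1: "prod f A = prod f (A - B) * prod f (A \<inter> B)"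
  proof -
    have "A = (A - B) \<union> (A \<inter> B)" by auto
    then have "prod f A = prod f ((A - B) \<union> (A \<inter> B))" by simp
    also have "\<dots> = prod f (A - B) * prod f (A \<inter> B)" using A by (intro prod.union_disjoint) auto
    finally show ?thesis .
  qed
  have 2: "prod f B = prod f (B - A) * prod f (A \<inter> B)"
  proof -
    have "B = (B - A) \<union> (A \<inter> B)" by auto
    then have "prod f B = prod f ((B - A) \<union> (A \<inter> B))" by simp
    also have "\<dots> = prod f (B - A) * prod f (A \<inter> B)" using B by (intro prod.union_disjoint) auto
    finally show ?thesis .
  qed
  have 3: "prod f (cw_add A B) = prod f (A - B) * prod f (B - A)"
    unfolding cw_add_def using A B by (intro prod.union_disjoint) auto
  have "prod f (A \<inter> B) * prod f (A \<inter> B) = 1" by (rule prod_sq[OF sq])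
  then show ?thesis unfolding 1 2 3 by (metis (no_types, lifting) mult.assoc mult.commute mult.right_neutral)
qed

lemma eps_sq[simp]: "eps r a b * eps r a b = 1"
  unfolding eps_def by (intro prod_sq) (rule eps0_sq)

lemma coords_fin: "r \<ge> 1 \<Longrightarrow> a \<in> Ceven r \<Longrightarrow> finite (coords r a)"
  using coords_ok(1) finite_subset by blast

lemma eps_add_left:
  assumes r: "r \<ge> 1" and a: "a \<in> Ceven r" and b: "b \<in> Ceven r"
  shows "eps r (cw_add a b) c = eps r a c * eps r b c"
  unfolding eps_def coords_add[OF r a b]
  by (rule prod_cw_add) (use coords_fin[OF r a] coords_fin[OF r b] in \<open>auto intro: prod_sq\<close>)

lemma eps_add_right:
  assumes r: "r \<ge> 1" and a: "a \<in> Ceven r" and b: "b \<in> Ceven r"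
  shows "eps r c (cw_add a b) = eps r c a * eps r c b"
  unfolding eps_def coords_add[OF r a b]
  by (subst prod.distrib[symmetric], rule prod.cong[OF refl], rule prod_cw_add)
     (use coords_fin[OF r a] coords_fin[OF r b] in auto)

lemma eps_empty_right: "r \<ge> 1 \<Longrightarrow> eps r a {} = 1"
  unfolding eps_def by (simp add: coords_empty)

lemma eps_Dlt:
  assumes r: "r \<ge> 1" and h: "h \<subseteq> {..<r}" and h': "h' \<subseteq> {..<r}"
  shows "eps r (Dlt r h) (Dlt r h') = 1"
proof -
  have "eps0 r i j = 1" if "i < r" "j < r" for i j
  proof -
    have w: "wt r (vb r i) = 0" using that vb_lo[of i r] unfolding wt_def wl_def wr_def
      by (auto simp: Int_insert_left)
    have "vb r i \<inter> vb r j = {}" if "i \<noteq> j" using that \<open>i < r\<close> \<open>j < r\<close> vb_lo by auto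
    then have "i \<noteq> j \<Longrightarrow> wt r (vb r i \<inter> vb r j) = 0" unfolding wt_def wl_def wr_def by simp
    then show ?thesis unfolding eps0_def using w by (cases "i = j") (auto simp: sgnpow_def)
  qed
  then show ?thesis unfolding eps_def coords_Dlt[OF r h] coords_Dlt[OF r h'] using h h'
    by (intro prod.neutral ballI) auto
qed



interpretation V: vector_space cscale
  by unfold_locales (auto simp: cscale_def algebra_simps)

lemma fun_sum_apply: "(\<Sum>a\<in>A. f a) x = (\<Sum>a\<in>A. f a x)"
  by (induction A rule: infinite_finite_induct) auto

lemma cscale_apply[simp]: "cscale c f x = c * f x" unfolding cscale_def by simp

lemma e_el_apply: "e_el a x = (if x = a then 1 else 0)" unfolding e_el_def by simp

lemma sum_ind:
  fixes f :: "'a \<Rightarrow> complex"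
  assumes "finite A" shows "(\<Sum>a\<in>A. f a * (if x = a then 1 else 0)) = (if x \<in> A then f x else 0)"
proof -
  have "(\<Sum>a\<in>A. f a * (if x = a then 1 else 0)) = (\<Sum>a\<in>A. if a = x then f a else 0)"
    by (rule sum.cong) auto
  then show ?thesis using assms by (simp add: sum.delta')
qed

lemma e_el_inj: "inj e_el"
  by (rule injI) (metis e_el_def one_neq_zero)

context
  fixes r :: nat and G :: "nat set set"
  assumes r1: "r \<ge> 1" and sg: "z2_subgroup r G" and top: "{..<r} \<in> G"
begin

abbreviation "C \<equiv> CG r G"

lemma CfinE: "finite C" using CG_fin[OF r1 sg top] .
lemma CaddE: "a \<in> C \<Longrightarrow> b \<in> C \<Longrightarrow> cw_add a b \<in> C" using CG_add[OF r1 sg top] .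
lemma CevE: "a \<in> C \<Longrightarrow> a \<in> Ceven r" using CG_Ceven[OF r1 sg top] by auto

lemma TA_subspace: "V.subspace (TA r G)"
  unfolding V.subspace_def TA_def by auto

lemma TA_span: "TA r G = V.span (e_el ` C)"
proof
  show "V.span (e_el ` C) \<subseteq> TA r G"
    by (rule V.span_minimal[OF _ TA_subspace]) (auto simp: TA_def e_el_def)
  show "TA r G \<subseteq> V.span (e_el ` C)"
  proof
    fix f assume f: "f \<in> TA r G"
    have "f = (\<Sum>a\<in>C. cscale (f a) (e_el a))"
    proof
      fix x
      show "f x = (\<Sum>a\<in>C. cscale (f a) (e_el a)) x"
        unfolding fun_sum_apply using f CfinE by (auto simp: e_el_apply TA_def sum_ind)
    qed
    also have "\<dots> \<in> V.span (e_el ` C)"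
      by (intro V.span_sum V.span_scale V.span_base) auto
    finally show "f \<in> V.span (e_el ` C)" .
  qed
qed

lemma e_indep: "V.independent (e_el ` C)"
proof (rule V.independent_if_scalars_zero)
  show "finite (e_el ` C)" using CfinE by simp
  fix f x assume s: "(\<Sum>x\<in>e_el ` C. cscale (f x) x) = 0" and x: "x \<in> e_el ` C"
  then obtain a where a: "a \<in> C" "x = e_el a" by auto
  have "0 = (\<Sum>x\<in>e_el ` C. cscale (f x) x) a" using s by simp
  also have "\<dots> = (\<Sum>b\<in>C. f (e_el b) * e_el b a)"
    unfolding fun_sum_apply by (subst sum.reindex) (use e_el_inj in \<open>auto simp: inj_on_def\<close>)
  also have "\<dots> = f (e_el a)" using a CfinE sum_ind[of C "\<lambda>b. f (e_el b)" a] by (simp add: e_el_apply)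
  finally show "f x = 0" using a by simp
qed

lemma dim_TA: "V.dim (TA r G) = card C"
proof -
  have "V.dim (TA r G) = card (e_el ` C)"
    unfolding TA_span by (rule V.dim_span_eq_card_independent[OF e_indep])
  then show ?thesis using e_el_inj by (simp add: card_image inj_on_subset)
qed

lemma tmult_e:
  assumes a: "a \<in> C" and b: "b \<in> C"
  shows "tmult r G (e_el a) (e_el b) = cscale (eps r a b) (e_el (cw_add a b))"
proof
  fix g
  show "tmult r G (e_el a) (e_el b) g = cscale (eps r a b) (e_el (cw_add a b)) g"
  proof (cases "g \<in> C")
    case True
    have "tmult r G (e_el a) (e_el b) g = (\<Sum>x\<in>C. if x = a then eps r a (cw_add g a) * e_el b (cw_add g a) else 0)"
      unfolding tmult_def using True by (auto intro!: sum.cong simp: e_el_apply)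
    also have "\<dots> = eps r a (cw_add g a) * e_el b (cw_add g a)" using a CfinE by simp
    also have "\<dots> = cscale (eps r a b) (e_el (cw_add a b)) g"
      by (auto simp: e_el_apply cw_add_eq_iff cw_add_comm)
    finally show ?thesis .
  next
    case False
    have "cw_add a b \<noteq> g" using CaddE[OF a b] False by auto
    then show ?thesis using False unfolding tmult_def by (simp add: e_el_apply)
  qed
qed

lemma tmult_right_e:
  assumes x: "x \<in> TA r G" and c: "c \<in> C"
  shows "tmult r G x (e_el c) = (\<lambda>b. if b \<in> C then eps r (cw_add b c) c * x (cw_add b c) else 0)"
proof
  fix g
  show "tmult r G x (e_el c) g = (if g \<in> C then eps r (cw_add g c) c * x (cw_add g c) else 0)"
  proof (cases "g \<in> C")
    case True
    have "tmult r G x (e_el c) g = (\<Sum>a\<in>C. if a = cw_add g c then eps r a (cw_add g a) * x a else 0)"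
      unfolding tmult_def using True
      by (simp only: if_True) (intro sum.cong refl, auto simp: e_el_apply cw_add_eq_iff)
    also have "\<dots> = eps r (cw_add g c) (cw_add g (cw_add g c)) * x (cw_add g c)"
      using CaddE[OF True c] CfinE by simp
    finally show ?thesis using True by simp
  next
    case False
    then show ?thesis unfolding tmult_def by simp
  qed
qed

end



context
  fixes r :: nat and G :: "nat set set" and g0 :: "nat set"
  assumes r1: "r \<ge> 1" and sg: "z2_subgroup r G" and top: "{..<r} \<in> G" and g0: "g0 \<in> G"
begin

abbreviation "K \<equiv> Dlt r ` Pow g0"

lemma g0_sub: "g0 \<subseteq> {..<r}" using g0 G_sub[OF r1 sg top] by auto

lemma K_DZ: "k \<in> K \<Longrightarrow> \<exists>h. h \<subseteq> {..<r} \<and> k = Dlt r h" using g0_sub by auto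

lemma K_C: assumes "k \<in> K" shows "k \<in> CG r G"
proof -
  obtain h where "h \<subseteq> {..<r}" "k = Dlt r h" using K_DZ[OF assms] by blast
  then show ?thesis using Dlt_CG[OF r1 sg top] by simp
qed

lemma K_Ceven: "k \<in> K \<Longrightarrow> k \<in> Ceven r" by (rule CevE[OF r1 sg top K_C])

lemma K_add: "a \<in> K \<Longrightarrow> b \<in> K \<Longrightarrow> cw_add a b \<in> K"
proof -
  assume "a \<in> K" "b \<in> K"
  then obtain x y where "x \<subseteq> g0" "y \<subseteq> g0" "a = Dlt r x" "b = Dlt r y" by auto
  moreover have "x \<subseteq> {..<r}" "y \<subseteq> {..<r}" using calculation g0_sub by auto
  moreover have "cw_add x y \<subseteq> g0" using calculation by (simp add: cw_add_subset)
  ultimately show ?thesis using Dlt_add[of x r y] by (metis PowI image_eqI)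
qed

lemma K_empty: "{} \<in> K" by (auto intro: image_eqI[of _ _ "{}"])

lemma K_fin: "finite K" using g0_sub finite_subset by (intro finite_imageI) auto

lemma card_K: "card K = 2 ^ card g0"
proof -
  have "inj_on (Dlt r) (Pow g0)" by (rule inj_on_subset[OF Dlt_inj]) (use g0_sub in auto)
  moreover have "finite g0" using g0_sub finite_subset by auto
  ultimately show ?thesis by (simp add: card_image card_Pow)
qed

lemma Delta_d_eq: "Delta_d r (Dlt r g0) = K"
proof (intro equalityI subsetI)
  fix a assume "a \<in> Delta_d r (Dlt r g0)"
  then obtain h where h: "h \<subseteq> {..<r}" "a = Dlt r h" "Dlt r h \<subseteq> Dlt r g0" unfolding Delta_d_def by auto
  then have "h \<subseteq> g0" using Dlt_mono_iff[OF h(1) g0_sub] by simp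
  then show "a \<in> K" using h by auto
next
  fix a assume "a \<in> K"
  then obtain h where h: "h \<subseteq> g0" "a = Dlt r h" by auto
  then have "h \<subseteq> {..<r}" using g0_sub by auto
  then show "a \<in> Delta_d r (Dlt r g0)" unfolding Delta_d_def using h Dlt_mono_iff[OF _ g0_sub, of h] by auto
qed

definition coset :: "nat set \<Rightarrow> nat set set" where
  "coset a = cw_add a ` K"

definition rep :: "nat set \<Rightarrow> nat set" where
  "rep a = (SOME b. b \<in> coset a)"

definition dl :: "nat set \<Rightarrow> nat set" where
  "dl a = cw_add a (rep a)"

lemma coset_mem: "a \<in> coset a" unfolding coset_def using K_empty by (auto intro: image_eqI[of _ _ "{}"])

lemma coset_eq: assumes "b \<in> coset a" shows "coset b = coset a"
proof -
  obtain k where k: "k \<in> K" "b = cw_add a k" using assms unfolding coset_def by auto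
  show ?thesis unfolding coset_def
  proof (intro equalityI subsetI)
    fix x assume "x \<in> cw_add b ` K"
    then obtain k' where "k' \<in> K" "x = cw_add b k'" by auto
    then show "x \<in> cw_add a ` K" using k K_add by (auto simp: cw_add_assoc intro!: image_eqI[of _ _ "cw_add k k'"])
  next
    fix x assume "x \<in> cw_add a ` K"
    then obtain k' where "k' \<in> K" "x = cw_add a k'" by auto
    moreover have "x = cw_add b (cw_add k k')" using calculation k
      by (simp add: cw_add_assoc[symmetric])
    ultimately show "x \<in> cw_add b ` K" using k K_add by auto
  qed
qed

lemma rep_in: "rep a \<in> coset a" unfolding rep_def using coset_mem by (rule someI)

lemma rep_eq: "b \<in> coset a \<Longrightarrow> rep b = rep a" unfolding rep_def using coset_eq by simp

lemma rep_rep: "rep (rep a) = rep a" using rep_eq[OF rep_in] .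

lemma dl_K: "dl a \<in> K" using rep_in[of a] unfolding dl_def coset_def by auto

lemma rep_dl: "cw_add (rep a) (dl a) = a" unfolding dl_def by (metis cw_add_cancel(1) cw_add_comm)

lemma coset_C: "a \<in> CG r G \<Longrightarrow> coset a \<subseteq> CG r G"
  unfolding coset_def using K_C CaddE[OF r1 sg top] by auto

lemma rep_C: "a \<in> CG r G \<Longrightarrow> rep a \<in> CG r G" using coset_C rep_in by blast

lemma rep_cw: "k \<in> K \<Longrightarrow> rep (cw_add a k) = rep a"
  by (rule rep_eq) (auto simp: coset_def)

lemma dl_rep: "rep a = a \<Longrightarrow> dl a = {}" unfolding dl_def by (metis cw_add_self)

definition tt :: "nat set \<Rightarrow> nat set \<Rightarrow> complex" where
  "tt a = cscale (eps r (rep a) (dl a)) (e_el a) - e_el (rep a)"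

definition NN where "NN = {a \<in> CG r G. rep a \<noteq> a}"
definition RR where "RR = {a \<in> CG r G. rep a = a}"

lemma tt_rep: "rep a = a \<Longrightarrow> tt a = 0"
  unfolding tt_def using dl_rep eps_empty_right[OF r1] by (auto simp: e_el_def)

lemma eps_nz: "eps r a b \<noteq> 0" using eps_sq[of r a b] by (metis mult_zero_left zero_neq_one)

lemma tt_at: "a' \<in> NN \<Longrightarrow> tt a' a = (if a = a' then eps r (rep a') (dl a') else 0)"
  if "a \<in> NN" for a
proof -
  assume a': "a' \<in> NN"
  have "rep a' \<noteq> a"
  proof
    assume "rep a' = a" then have "rep a = a" using rep_rep by metis
    then show False using that unfolding NN_def by auto
  qed
  then show ?thesis unfolding tt_def by (auto simp: e_el_def)
qed

lemma tt_inj: "inj_on tt NN"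
proof (rule inj_onI)
  fix a a' assume a: "a \<in> NN" and a': "a' \<in> NN" and e: "tt a = tt a'"
  have "tt a a = eps r (rep a) (dl a)" using tt_at[OF a a] by simp
  moreover have "tt a' a = (if a = a' then eps r (rep a') (dl a') else 0)" using tt_at[OF a a'] .
  ultimately show "a = a'" using e eps_nz by (metis)
qed

lemma NN_fin: "finite NN" unfolding NN_def using CfinE[OF r1 sg top] by simp

lemma W_indep: "V.independent (tt ` NN)"
proof (rule V.independent_if_scalars_zero)
  show "finite (tt ` NN)" using NN_fin by simp
  fix f x assume s: "(\<Sum>x\<in>tt ` NN. cscale (f x) x) = 0" and x: "x \<in> tt ` NN"
  then obtain a where a: "a \<in> NN" "x = tt a" by auto
  have "0 = (\<Sum>x\<in>tt ` NN. cscale (f x) x) a" using s by simp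
  also have "\<dots> = (\<Sum>b\<in>NN. f (tt b) * tt b a)"
    unfolding fun_sum_apply by (subst sum.reindex[OF tt_inj]) simp
  also have "\<dots> = (\<Sum>b\<in>NN. if b = a then f (tt a) * eps r (rep a) (dl a) else 0)"
    by (rule sum.cong) (auto simp: tt_at[OF a(1)])
  also have "\<dots> = f (tt a) * eps r (rep a) (dl a)" using a NN_fin by simp
  finally show "f x = 0" using a eps_nz by simp
qed


lemma cw_add_eq_iff': "b = cw_add a g \<longleftrightarrow> a = cw_add b g" unfolding cw_add_def by auto

definition gens where
  "gens = {tmult r G x (e_el \<gamma>) - x | x \<gamma>. x \<in> TA r G \<and> \<gamma> \<in> Delta_d r (Dlt r g0)}"

lemma W_gens: "tt ` NN \<subseteq> gens"
proof
  fix w assume "w \<in> tt ` NN"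
  then obtain a where a: "a \<in> NN" "w = tt a" by auto
  have aC: "a \<in> CG r G" using a unfolding NN_def by auto
  have rC: "rep a \<in> CG r G" using rep_C[OF aC] .
  have dC: "dl a \<in> CG r G" using K_C[OF dl_K] .
  have "tmult r G (e_el (rep a)) (e_el (dl a)) - e_el (rep a) = tt a"
    unfolding tmult_e[OF r1 sg top rC dC] rep_dl tt_def ..
  moreover have "e_el (rep a) \<in> TA r G" using rC unfolding TA_def e_el_def by auto
  moreover have "dl a \<in> Delta_d r (Dlt r g0)" using dl_K Delta_d_eq by simp
  ultimately show "w \<in> gens" unfolding gens_def using a(2)
    by (intro CollectI exI[of _ "e_el (rep a)"] exI[of _ "dl a"]) simp
qed

lemma tt_span: "a \<in> CG r G \<Longrightarrow> tt a \<in> V.span (tt ` NN)"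
proof (cases "rep a = a")
  case True then show ?thesis using tt_rep V.span_zero by simp
next
  case False
  assume "a \<in> CG r G"
  then have "a \<in> NN" using False unfolding NN_def by auto
  then show ?thesis by (intro V.span_base) auto
qed

lemma pm1: "(x::complex) * x = 1 \<Longrightarrow> x = 1 \<or> x = -1" using square_eq_1_iff by blast

lemma u_span:
  assumes aC: "a \<in> CG r G" and g: "\<gamma> \<in> K"
  shows "cscale (eps r a \<gamma>) (e_el (cw_add a \<gamma>)) - e_el a \<in> V.span (tt ` NN)"
proof -
  define \<rho> where "\<rho> = rep a"
  define \<delta> where "\<delta> = dl a"
  define a' where "a' = cw_add a \<gamma>"
  have ra': "rep a' = \<rho>" unfolding a'_def \<rho>_def using rep_cw[OF g] .
  have a_eq: "a = cw_add \<rho> \<delta>" unfolding \<rho>_def \<delta>_def using rep_dl by simp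
  have d0: "dl a' = cw_add a' \<rho>" by (simp only: dl_def ra')
  have d': "dl a' = cw_add \<delta> \<gamma>" unfolding d0 unfolding a'_def \<delta>_def \<rho>_def dl_def cw_add_def by auto
  have a'C: "a' \<in> CG r G" unfolding a'_def using CaddE[OF r1 sg top aC K_C[OF g]] .
  have \<rho>E: "\<rho> \<in> Ceven r" unfolding \<rho>_def using CevE[OF r1 sg top rep_C[OF aC]] .
  have \<delta>K: "\<delta> \<in> K" unfolding \<delta>_def using dl_K .
  have \<delta>E: "\<delta> \<in> Ceven r" using K_Ceven[OF \<delta>K] .
  have gE: "\<gamma> \<in> Ceven r" using K_Ceven[OF g] .
  have dg: "eps r \<delta> \<gamma> = 1"
  proof -
    obtain h where h: "h \<subseteq> {..<r}" "\<delta> = Dlt r h" using K_DZ[OF \<delta>K] by blast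
    obtain h' where h': "h' \<subseteq> {..<r}" "\<gamma> = Dlt r h'" using K_DZ[OF g] by blast
    show ?thesis using eps_Dlt[OF r1 h(1) h'(1)] h h' by simp
  qed
  have e1: "eps r a \<gamma> = eps r \<rho> \<gamma>" unfolding a_eq eps_add_left[OF r1 \<rho>E \<delta>E] dg by simp
  have e2: "eps r \<rho> (dl a') = eps r \<rho> \<delta> * eps r \<rho> \<gamma>" unfolding d' eps_add_right[OF r1 \<delta>E gE] ..
  have tt1: "tt a' = cscale (eps r \<rho> \<delta> * eps r \<rho> \<gamma>) (e_el a') - e_el \<rho>"
    unfolding tt_def ra' e2 ..
  have tt2: "tt a = cscale (eps r \<rho> \<delta>) (e_el a) - e_el \<rho>"
    unfolding tt_def \<rho>_def \<delta>_def ..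
  have p: "eps r \<rho> \<gamma> = 1 \<or> eps r \<rho> \<gamma> = -1" using pm1[OF eps_sq] .
  have q: "eps r \<rho> \<delta> = 1 \<or> eps r \<rho> \<delta> = -1" using pm1[OF eps_sq] .
  have eq: "cscale (eps r a \<gamma>) (e_el a') - e_el a =
     cscale (eps r \<rho> \<delta>) (tt a') - cscale (eps r \<rho> \<delta>) (tt a)"
  proof
    fix x
    show "(cscale (eps r a \<gamma>) (e_el a') - e_el a) x =
      (cscale (eps r \<rho> \<delta>) (tt a') - cscale (eps r \<rho> \<delta>) (tt a)) x"
      unfolding tt1 tt2 e1 using p q by (auto simp: e_el_apply)
  qed
  have "cscale (eps r \<rho> \<delta>) (tt a') - cscale (eps r \<rho> \<delta>) (tt a) \<in> V.span (tt ` NN)"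
    by (intro V.span_diff V.span_scale tt_span aC a'C)
  then show ?thesis using eq unfolding a'_def by simp
qed

lemma gens_span: "gens \<subseteq> V.span (tt ` NN)"
proof
  fix w assume "w \<in> gens"
  then obtain x \<gamma> where w: "w = tmult r G x (e_el \<gamma>) - x" and x: "x \<in> TA r G" and g: "\<gamma> \<in> K"
    unfolding gens_def Delta_d_eq by blast
  have gC: "\<gamma> \<in> CG r G" using K_C[OF g] .
  have fC: "finite (CG r G)" using CfinE[OF r1 sg top] .
  have "w = (\<Sum>a\<in>CG r G. cscale (x a) (cscale (eps r a \<gamma>) (e_el (cw_add a \<gamma>)) - e_el a))"
  proof
    fix b
    have s1: "(\<Sum>a\<in>CG r G. x a * (eps r a \<gamma> * e_el (cw_add a \<gamma>) b)) =
        (\<Sum>a\<in>CG r G. if a = cw_add b \<gamma> then x a * eps r a \<gamma> else 0)"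
      by (intro sum.cong refl) (simp add: e_el_apply cw_add_eq_iff')
    have s2: "(\<Sum>a\<in>CG r G. x a * e_el a b) = (\<Sum>a\<in>CG r G. if a = b then x a else 0)"
      by (rule sum.cong) (auto simp: e_el_apply)
    have bC: "cw_add b \<gamma> \<in> CG r G \<longleftrightarrow> b \<in> CG r G"
      using CaddE[OF r1 sg top _ gC] by (metis cw_add_cancel(2))
    have "(\<Sum>a\<in>CG r G. cscale (x a) (cscale (eps r a \<gamma>) (e_el (cw_add a \<gamma>)) - e_el a)) b =
        (\<Sum>a\<in>CG r G. x a * (eps r a \<gamma> * e_el (cw_add a \<gamma>) b)) - (\<Sum>a\<in>CG r G. x a * e_el a b)"
      unfolding fun_sum_apply by (simp add: right_diff_distrib sum_subtractf)
    also have "\<dots> = (if b \<in> CG r G then x (cw_add b \<gamma>) * eps r (cw_add b \<gamma>) \<gamma> else 0) - (if b \<in> CG r G then x b else 0)"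
      unfolding s1 s2 using fC bC by (simp add: sum.delta')
    also have "\<dots> = w b" unfolding w tmult_right_e[OF r1 sg top x gC] using x by (auto simp: TA_def)
    finally show "w b = (\<Sum>a\<in>CG r G. cscale (x a) (cscale (eps r a \<gamma>) (e_el (cw_add a \<gamma>)) - e_el a)) b" ..
  qed
  also have "\<dots> \<in> V.span (tt ` NN)"
    by (intro V.span_sum V.span_scale u_span g)
  finally show "w \<in> V.span (tt ` NN)" .
qed

lemma RR_sub: "RR \<subseteq> CG r G" unfolding RR_def by auto
lemma NN_eq: "NN = CG r G - RR" unfolding NN_def RR_def by auto

lemma dim_A_eq: "dim_A r G (Dlt r g0) = card RR"
proof -
  have rel: "rel_A r G (Dlt r g0) = V.span (tt ` NN)"
  proof
    show "rel_A r G (Dlt r g0) \<subseteq> V.span (tt ` NN)"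
      unfolding rel_A_def gens_def[symmetric] by (rule V.span_minimal[OF gens_span V.subspace_span])
    show "V.span (tt ` NN) \<subseteq> rel_A r G (Dlt r g0)"
      unfolding rel_A_def gens_def[symmetric] by (rule V.span_mono[OF W_gens])
  qed
  have "V.dim (rel_A r G (Dlt r g0)) = card (tt ` NN)"
    unfolding rel by (rule V.dim_span_eq_card_independent[OF W_indep])
  also have "\<dots> = card NN" using tt_inj by (simp add: card_image)
  also have "\<dots> = card (CG r G) - card RR" unfolding NN_eq
    using RR_sub CfinE[OF r1 sg top] by (simp add: card_Diff_subset finite_subset)
  finally have "V.dim (rel_A r G (Dlt r g0)) = card (CG r G) - card RR" .
  moreover have "card RR \<le> card (CG r G)" using RR_sub CfinE[OF r1 sg top] by (simp add: card_mono)
  ultimately show ?thesis unfolding dim_A_def dim_TA[OF r1 sg top] by simp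
qed

lemma card_RR: "card RR * card K = card (CG r G)"
proof -
  have fC: "finite (CG r G)" using CfinE[OF r1 sg top] .
  have U: "(\<Union>(coset ` RR)) = CG r G"
  proof (intro equalityI subsetI)
    fix x assume "x \<in> \<Union>(coset ` RR)"
    then obtain \<rho> where "\<rho> \<in> RR" "x \<in> coset \<rho>" by auto
    then show "x \<in> CG r G" using coset_C RR_sub by blast
  next
    fix x assume x: "x \<in> CG r G"
    have "rep x \<in> RR" unfolding RR_def using rep_C[OF x] rep_rep by simp
    moreover have "x \<in> coset (rep x)" using coset_eq[OF rep_in] coset_mem by simp
    ultimately show "x \<in> \<Union>(coset ` RR)" by auto
  qed
  have ck: "card (coset \<rho>) = card K" for \<rho>
  proof -
    have "inj_on (cw_add \<rho>) K" by (rule inj_onI) (metis cw_add_cancel(1))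
    then show ?thesis unfolding coset_def by (simp add: card_image)
  qed
  have "card (\<Union>(coset ` RR)) = (\<Sum>\<rho>\<in>RR. card (coset \<rho>))"
  proof (rule card_UN_disjoint)
    show "finite RR" using RR_sub fC finite_subset by auto
    show "\<forall>i\<in>RR. finite (coset i)" unfolding coset_def using K_fin by auto
    show "\<forall>i\<in>RR. \<forall>j\<in>RR. i \<noteq> j \<longrightarrow> coset i \<inter> coset j = {}"
    proof (intro ballI impI)
      fix i j assume i: "i \<in> RR" and j: "j \<in> RR" and ne: "i \<noteq> j"
      show "coset i \<inter> coset j = {}"
      proof (rule ccontr)
        assume "coset i \<inter> coset j \<noteq> {}"
        then obtain x where "x \<in> coset i" "x \<in> coset j" by auto
        then have "rep i = rep j" using rep_eq by metis
        then show False using i j ne unfolding RR_def by auto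
      qed
    qed
  qed
  then show ?thesis using U ck by simp
qed


lemma dim_A_real: "real (dim_A r G (Dlt r g0)) = real (card (CG r G)) * (1/2) ^ card g0"
proof -
  have "real (card RR) * 2 ^ card g0 = real (card (CG r G))"
    using card_RR card_K by (metis of_nat_mult of_nat_numeral of_nat_power)
  then show ?thesis unfolding dim_A_eq by (simp add: field_simps power_one_over)
qed

end



theorem mainTheorem16:
  fixes r :: nat and G :: "nat set set"
  assumes "r \<ge> 1"
    and "z2_subgroup r G"
    and "{..<r} \<in> G"
  shows "real (dim_S r G) = 2 ^ (2*r - z2_dim G) * PG r G (1/2)"
proof -
  note A = assms
  have Gs: "G \<subseteq> Pow {..<r}" using G_sub[OF A] .
  have fG: "finite G" using G_fin[OF A] .
  have "dim_S r G = (\<Sum>g\<in>G. dim_A r G (Dlt r g))"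
    unfolding dim_S_def DG_def by (rule sum.reindex[OF inj_on_subset[OF Dlt_inj Gs], unfolded comp_def])
  then have "real (dim_S r G) = (\<Sum>g\<in>G. real (dim_A r G (Dlt r g)))" by simp
  also have "\<dots> = (\<Sum>g\<in>G. real (card (CG r G)) * (1/2) ^ card g)"
    by (rule sum.cong[OF refl]) (rule dim_A_real[OF A])
  also have "\<dots> = real (card (CG r G)) * (\<Sum>g\<in>G. (1/2) ^ card g)"
    by (simp add: sum_distrib_left)
  also have "(\<Sum>g\<in>G. (1/2::real) ^ card g) = PG r G (1/2)"
  proof -
    have cs: "card ` G \<subseteq> {0..r}"
    proof
      fix k assume "k \<in> card ` G"
      then obtain g where "g \<in> G" "k = card g" by auto
      then have "g \<subseteq> {..<r}" using Gs by auto
      then have "card g \<le> r" by (metis card_lessThan card_mono finite_lessThan)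
      then show "k \<in> {0..r}" using \<open>k = card g\<close> by simp
    qed
    have "(\<Sum>g\<in>G. (1/2::real) ^ card g) = (\<Sum>k\<in>{0..r}. \<Sum>g\<in>{g. g \<in> G \<and> card g = k}. (1/2::real) ^ card g)"
      by (rule sum.group[symmetric, OF fG _ cs]) simp
    also have "\<dots> = (\<Sum>k\<in>{0..r}. real (Nk G k) * (1/2) ^ k)"
      unfolding Nk_def by (rule sum.cong[OF refl]) simp
    finally show ?thesis unfolding PG_def .
  qed
  finally show ?thesis using card_CG[OF A] by simp
qed


end
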